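(* Let $R$ be a commutative ring with ${\rm char}(R)=3$, $G$ a group with involution $\varphi$, and assume $(RG)^-_\varphi$ is commutative. Let $g,h\in G\setminus G_\varphi$ be non-commuting elements. Consider the conditions: (C1) $gh\in G_\varphi$, $hg\in G_\varphi$, $h\varphi(g)=g\varphi(h)$ and $\varphi(h)g=\varphi(g)h$; (C2) $gh\in G_\varphi$, $hg\in G_\varphi$, $h\varphi(g)=\varphi(g)h$; (C3) $gh\in G_\varphi$, $hg=\varphi(g)h=g\varphi(h)$; (C4) $gh=h\varphi(g)=\varphi(g)\varphi(h)$ and $\varphi(h)g=\varphi(g)h$; (C5) $gh=\varphi(h)g=\varphi(g)\varphi(h)$ and $h\varphi(g)=g\varphi(h)$; (C6) $hg\in G_\varphi$, $gh=\varphi(h)g=h\varphi(g)$. \begin{enumerate} \item If $g,h$ satisfy (C1) or (C2), then $g^3\notin G_\varphi$ and $h^3\notin G_\varphi$. \item If $g,h$ satisfy one of (C3)–(C6), then $g^3,h^3\in G_\varphi$ and $g^3,h^3$ lie in the center of $\langle g,h,\varphi(g),\varphi(h)\rangle$. \end{enumerate}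
   Context: An involution on a group $G$ is a map $\varphi:G\to G$ with $\varphi(gh)=\varphi(h)\varphi(g)$ and $\varphi^2=\mathrm{id}$, extended $R$-linearly to $RG$. $G_\varphi=\{g\in G\mid\varphi(g)=g\}$; $(RG)^-_\varphi=\{\alpha\in RG\mid\varphi(\alpha)=-\alpha\}$. *)

theory Defs
  imports "HOL-Algebra.Algebra"
begin

definition group_involution :: "('g, 'b) monoid_scheme \<Rightarrow> ('g \<Rightarrow> 'g) \<Rightarrow> bool" where
  "group_involution G \<phi> \<longleftrightarrow>
     \<phi> \<in> carrier G \<rightarrow> carrier G \<and>
     (\<forall>x\<in>carrier G. \<forall>y\<in>carrier G. \<phi> (x \<otimes>\<^bsub>G\<^esub> y) = \<phi> y \<otimes>\<^bsub>G\<^esub> \<phi> x) \<and>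
     (\<forall>x\<in>carrier G. \<phi> (\<phi> x) = x)"

definition fixed_elems :: "('g, 'b) monoid_scheme \<Rightarrow> ('g \<Rightarrow> 'g) \<Rightarrow> 'g set" where
  "fixed_elems G \<phi> = {x \<in> carrier G. \<phi> x = x}"

definition group_ring :: "('g, 'b) monoid_scheme \<Rightarrow> ('g \<Rightarrow> 'r::comm_ring_1) set" where
  "group_ring G = {a. finite {x. a x \<noteq> 0} \<and> (\<forall>x. x \<notin> carrier G \<longrightarrow> a x = 0)}"

definition gr_mult :: "('g, 'b) monoid_scheme \<Rightarrow> ('g \<Rightarrow> 'r::comm_ring_1) \<Rightarrow> ('g \<Rightarrow> 'r) \<Rightarrow> ('g \<Rightarrow> 'r)" where
  "gr_mult G a b = (\<lambda>x. if x \<in> carrier G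
      then (\<Sum>y\<in>{y. a y \<noteq> 0}. a y * b (inv\<^bsub>G\<^esub> y \<otimes>\<^bsub>G\<^esub> x)) else 0)"

text \<open>R-linear extension of phi to RG: phi(sum a_g g) = sum a_g phi(g), i.e. coefficient at x is a(phi x).\<close>
definition gr_ext :: "('g, 'b) monoid_scheme \<Rightarrow> ('g \<Rightarrow> 'g) \<Rightarrow> ('g \<Rightarrow> 'r::comm_ring_1) \<Rightarrow> ('g \<Rightarrow> 'r)" where
  "gr_ext G \<phi> a = (\<lambda>x. if x \<in> carrier G then a (\<phi> x) else 0)"

definition gr_skew :: "('g, 'b) monoid_scheme \<Rightarrow> ('g \<Rightarrow> 'g) \<Rightarrow> ('g \<Rightarrow> 'r::comm_ring_1) set" where
  "gr_skew G \<phi> = {a \<in> group_ring G. gr_ext G \<phi> a = - a}"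

definition skew_commutative :: "('g, 'b) monoid_scheme \<Rightarrow> ('g \<Rightarrow> 'g) \<Rightarrow> 'r::comm_ring_1 itself \<Rightarrow> bool" where
  "skew_commutative G \<phi> _ \<longleftrightarrow>
     (\<forall>a\<in>(gr_skew G \<phi> :: ('g \<Rightarrow> 'r) set). \<forall>b\<in>gr_skew G \<phi>. gr_mult G a b = gr_mult G b a)"

end

theory Submission
  imports Defs
begin

definition ind :: "'a \<Rightarrow> 'a \<Rightarrow> nat" where
  "ind w z = (if w = z then 1 else 0)"

definition cntA :: "('g, 'b) monoid_scheme \<Rightarrow> ('g \<Rightarrow> 'g) \<Rightarrow> 'g \<Rightarrow> 'g \<Rightarrow> 'g \<Rightarrow> nat" where
  "cntA G \<phi> a b z = ind (a \<otimes>\<^bsub>G\<^esub> b) z + ind (\<phi> a \<otimes>\<^bsub>G\<^esub> \<phi> b) z + ind (b \<otimes>\<^bsub>G\<^esub> \<phi> a) z + ind (\<phi> b \<otimes>\<^bsub>G\<^esub> a) z"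

definition cntB :: "('g, 'b) monoid_scheme \<Rightarrow> ('g \<Rightarrow> 'g) \<Rightarrow> 'g \<Rightarrow> 'g \<Rightarrow> 'g \<Rightarrow> nat" where
  "cntB G \<phi> a b z = ind (b \<otimes>\<^bsub>G\<^esub> a) z + ind (\<phi> b \<otimes>\<^bsub>G\<^esub> \<phi> a) z + ind (a \<otimes>\<^bsub>G\<^esub> \<phi> b) z + ind (\<phi> a \<otimes>\<^bsub>G\<^esub> b) z"

locale invol_group = group G for G (structure) +
  fixes \<phi> :: "'a \<Rightarrow> 'a"
  assumes invol: "group_involution G \<phi>"
begin

lemma phi_closed[simp]: "x \<in> carrier G \<Longrightarrow> \<phi> x \<in> carrier G"
  using invol unfolding group_involution_def by blast

lemma phi_mult: "x \<in> carrier G \<Longrightarrow> y \<in> carrier G \<Longrightarrow> \<phi> (x \<otimes> y) = \<phi> y \<otimes> \<phi> x"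
  using invol unfolding group_involution_def by blast

lemma phi_phi[simp]: "x \<in> carrier G \<Longrightarrow> \<phi> (\<phi> x) = x"
  using invol unfolding group_involution_def by blast

lemma phi_eq_iff: "x \<in> carrier G \<Longrightarrow> y \<in> carrier G \<Longrightarrow> \<phi> x = \<phi> y \<longleftrightarrow> x = y"
  by (metis phi_phi)

lemma phi_one[simp]: "\<phi> \<one> = \<one>"
proof -
  have "\<phi> \<one> \<otimes> \<phi> \<one> = \<phi> \<one>" using phi_mult[of \<one> \<one>] by simp
  then show ?thesis by simp
qed

lemma phi_cube: "x \<in> carrier G \<Longrightarrow> \<phi> (x \<otimes> x \<otimes> x) = \<phi> x \<otimes> \<phi> x \<otimes> \<phi> x"
  by (simp add: phi_mult m_assoc)

lemma phi_inv: "x \<in> carrier G \<Longrightarrow> \<phi> (inv x) = inv (\<phi> x)"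
proof -
  assume x: "x \<in> carrier G"
  have "\<phi> (inv x) \<otimes> \<phi> x = \<one>" using phi_mult[of x "inv x"] x by simp
  then show ?thesis using x by (metis inv_equality inv_closed phi_closed)
qed

end

lemma of_nat_eq_iff_mod3:
  assumes "(of_nat m :: 'r::comm_ring_1) = of_nat n" and "CHAR('r) = 3"
  shows "m mod 3 = n mod 3"
proof (cases "n \<le> m")
  case True
  then have "(of_nat (m - n) :: 'r) = 0" using assms(1) by (simp add: of_nat_diff)
  then have "3 dvd (m - n)" using assms(2) of_nat_eq_0_iff_char_dvd by metis
  then show ?thesis using True by (metis mod_eq_dvd_iff_nat)
next
  case False
  then have "(of_nat (n - m) :: 'r) = 0" using assms(1) by (simp add: of_nat_diff)
  then have "3 dvd (n - m)" using assms(2) of_nat_eq_0_iff_char_dvd by metis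
  then show ?thesis using False by (metis mod_eq_dvd_iff_nat nat_le_linear)
qed

context group
begin

lemma inv_cancel_left[simp]: "x \<in> carrier G \<Longrightarrow> y \<in> carrier G \<Longrightarrow> inv x \<otimes> (x \<otimes> y) = y"
  by (simp add: m_assoc[symmetric])

lemma inv_cancel_left2[simp]: "x \<in> carrier G \<Longrightarrow> y \<in> carrier G \<Longrightarrow> x \<otimes> (inv x \<otimes> y) = y"
  by (simp add: m_assoc[symmetric])

lemma left_cancel_iff[simp]: "x \<in> carrier G \<Longrightarrow> y \<in> carrier G \<Longrightarrow> z \<in> carrier G \<Longrightarrow> x \<otimes> y = x \<otimes> z \<longleftrightarrow> y = z"
  by (metis inv_cancel_left)

lemma inv_eq_iff[simp]: "x \<in> carrier G \<Longrightarrow> y \<in> carrier G \<Longrightarrow> inv x = inv y \<longleftrightarrow> x = y"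
  by (metis inv_inv)

lemma pow3: "x \<in> carrier G \<Longrightarrow> x [^] (3::nat) = x \<otimes> x \<otimes> x"
  by (simp add: numeral_3_eq_3)

lemma comm_mult_right: "a \<in> carrier G \<Longrightarrow> b \<in> carrier G \<Longrightarrow> c \<in> carrier G \<Longrightarrow>
   a \<otimes> b = b \<otimes> a \<Longrightarrow> a \<otimes> c = c \<otimes> a \<Longrightarrow> a \<otimes> (b \<otimes> c) = (b \<otimes> c) \<otimes> a"
  by (metis m_assoc)

lemma comm_inv_right: "a \<in> carrier G \<Longrightarrow> b \<in> carrier G \<Longrightarrow>
   a \<otimes> b = b \<otimes> a \<Longrightarrow> a \<otimes> inv b = inv b \<otimes> a"
  by (metis inv_solve_left' inv_solve_right' m_closed inv_closed m_assoc)

lemma comm_cube: "a \<in> carrier G \<Longrightarrow> b \<in> carrier G \<Longrightarrow>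
   a \<otimes> b = b \<otimes> a \<Longrightarrow> (a \<otimes> a \<otimes> a) \<otimes> b = b \<otimes> (a \<otimes> a \<otimes> a)"
  by (metis m_assoc m_closed)

lemma ext_eq: "a \<otimes> b = c \<Longrightarrow> a \<in> carrier G \<Longrightarrow> b \<in> carrier G \<Longrightarrow> w \<in> carrier G \<Longrightarrow>
   a \<otimes> (b \<otimes> w) = c \<otimes> w"
  by (simp add: m_assoc[symmetric])

lemma cube_mult_comm:
  assumes "d \<in> carrier G" "g \<in> carrier G" "d \<otimes> g = g \<otimes> d"
  shows "(d \<otimes> g) \<otimes> (d \<otimes> g) \<otimes> (d \<otimes> g) = (d \<otimes> d \<otimes> d) \<otimes> (g \<otimes> g \<otimes> g)"
  using assms by (metis m_assoc m_closed)

lemma cube_conj: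
  assumes "g \<in> carrier G" "h \<in> carrier G" "y \<in> carrier G" "g \<otimes> y = h \<otimes> g"
  shows "g \<otimes> (y \<otimes> y \<otimes> y) = (h \<otimes> h \<otimes> h) \<otimes> g"
  using assms by (metis m_assoc m_closed)

lemma core:
  assumes c: "d \<in> carrier G" "g \<in> carrier G" "h \<in> carrier G"
    and dg: "d \<otimes> g = g \<otimes> d" and dh: "d \<otimes> h = h \<otimes> d" and d3: "d \<otimes> d \<otimes> d = \<one>"
    and hg: "h \<otimes> g = d \<otimes> g \<otimes> h"
  shows "(g \<otimes> g \<otimes> g) \<otimes> h = h \<otimes> (g \<otimes> g \<otimes> g)" "(h \<otimes> h \<otimes> h) \<otimes> g = g \<otimes> (h \<otimes> h \<otimes> h)"
proof -
  have hg': "h \<otimes> (g \<otimes> w) = d \<otimes> (g \<otimes> (h \<otimes> w))" if "w \<in> carrier G" for w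
    using c hg that by (metis m_assoc m_closed)
  have "h \<otimes> (g \<otimes> g \<otimes> g) = d \<otimes> g \<otimes> d \<otimes> g \<otimes> d \<otimes> g \<otimes> h" using c hg hg' by (simp add: m_assoc)
  also have "\<dots> = (d \<otimes> d \<otimes> d) \<otimes> (g \<otimes> g \<otimes> g) \<otimes> h" using c dg by (metis m_assoc m_closed)
  finally have "h \<otimes> (g \<otimes> g \<otimes> g) = (d \<otimes> d \<otimes> d) \<otimes> (g \<otimes> g \<otimes> g) \<otimes> h" .
  then show "(g \<otimes> g \<otimes> g) \<otimes> h = h \<otimes> (g \<otimes> g \<otimes> g)" using c d3 by (metis l_one m_closed)
  have "(h \<otimes> h \<otimes> h) \<otimes> g = h \<otimes> h \<otimes> (d \<otimes> g \<otimes> h)" using c hg by (simp add: m_assoc)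
  also have "\<dots> = d \<otimes> (h \<otimes> (h \<otimes> g)) \<otimes> h" using c dh by (metis m_assoc m_closed)
  also have "\<dots> = d \<otimes> (h \<otimes> (d \<otimes> g \<otimes> h)) \<otimes> h" using hg by simp
  also have "\<dots> = d \<otimes> d \<otimes> (h \<otimes> g) \<otimes> h \<otimes> h" using c dh by (metis m_assoc m_closed)
  also have "\<dots> = d \<otimes> d \<otimes> (d \<otimes> g \<otimes> h) \<otimes> h \<otimes> h" using hg by simp
  also have "\<dots> = (d \<otimes> d \<otimes> d) \<otimes> g \<otimes> (h \<otimes> h \<otimes> h)" using c by (simp add: m_assoc)
  finally have "(h \<otimes> h \<otimes> h) \<otimes> g = (d \<otimes> d \<otimes> d) \<otimes> g \<otimes> (h \<otimes> h \<otimes> h)" .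
  then show "(h \<otimes> h \<otimes> h) \<otimes> g = g \<otimes> (h \<otimes> h \<otimes> h)" using c d3 by (metis l_one m_closed)
qed

end

lemma pair_count:
  fixes G (structure) and \<phi> :: "'g \<Rightarrow> 'g" and a b z :: 'g
  assumes grp: "group G" and ch: "CHAR('r::comm_ring_1) = 3"
    and inv: "group_involution G \<phi>" and sk: "skew_commutative G \<phi> TYPE('r)"
    and a: "a \<in> carrier G" "\<phi> a \<noteq> a" and b: "b \<in> carrier G" "\<phi> b \<noteq> b" and z: "z \<in> carrier G"
  shows "cntA G \<phi> a b z mod 3 = cntB G \<phi> a b z mod 3"
proof -
  interpret invol_group G \<phi> using grp inv by (simp add: invol_group_def invol_group_axioms_def)
  define s :: "'g \<Rightarrow> 'g \<Rightarrow> 'r" where "s c = (\<lambda>w. (if w = c then 1 else 0) - (if w = \<phi> c then 1 else 0))" for c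
  have one_ne: "(1::'r) \<noteq> 0"
    using of_nat_eq_0_iff_char_dvd[where 'a='r, of 1] ch by simp
  have supp: "{w. s c w \<noteq> 0} = {c, \<phi> c}" if "\<phi> c \<noteq> c" for c
    using that one_ne by (auto simp: s_def)
  have skew: "s c \<in> gr_skew G \<phi>" if c: "c \<in> carrier G" "\<phi> c \<noteq> c" for c
  proof -
    have "s c \<in> group_ring G"
      unfolding group_ring_def using supp[OF c(2)] c by (auto simp: s_def)
    moreover have "gr_ext G \<phi> (s c) = - s c"
    proof
      fix w show "gr_ext G \<phi> (s c) w = (- s c) w"
      proof (cases "w \<in> carrier G")
        case True
        have e1: "\<phi> w = c \<longleftrightarrow> w = \<phi> c" using True c by (metis phi_phi)
        have e2: "\<phi> w = \<phi> c \<longleftrightarrow> w = c" using True c by (metis phi_phi)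
        show ?thesis using True e1 e2 c by (auto simp: gr_ext_def s_def)
      next
        case False
        then have "w \<noteq> c" "w \<noteq> \<phi> c" using c by auto
        then show ?thesis using False by (simp add: gr_ext_def s_def)
      qed
    qed
    ultimately show ?thesis unfolding gr_skew_def by simp
  qed
  have mult: "gr_mult G (s c) (s d) z =
      (if c \<otimes> d = z then 1 else 0) - (if c \<otimes> \<phi> d = z then 1 else 0)
      - (if \<phi> c \<otimes> d = z then 1 else 0) + (if \<phi> c \<otimes> \<phi> d = z then 1 else 0)"
    if c: "c \<in> carrier G" "\<phi> c \<noteq> c" and d: "d \<in> carrier G" "\<phi> d \<noteq> d" for c d
  proof -
    have "gr_mult G (s c) (s d) z = (\<Sum>y\<in>{c, \<phi> c}. s c y * s d (inv y \<otimes> z))"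
      unfolding gr_mult_def using z supp[OF c(2)] by simp
    also have "\<dots> = s c c * s d (inv c \<otimes> z) + s c (\<phi> c) * s d (inv (\<phi> c) \<otimes> z)"
      using c by simp
    also have "\<dots> = s d (inv c \<otimes> z) - s d (inv (\<phi> c) \<otimes> z)"
      using c by (simp add: s_def)
    also have "\<dots> = ((if c \<otimes> d = z then 1 else 0) - (if c \<otimes> \<phi> d = z then 1 else 0))
      - ((if \<phi> c \<otimes> d = z then 1 else 0) - (if \<phi> c \<otimes> \<phi> d = z then 1 else 0))"
    proof -
      have i: "inv e \<otimes> z = f \<longleftrightarrow> e \<otimes> f = z" if "e \<in> carrier G" "f \<in> carrier G" for e f
        using inv_solve_left'[OF that(2) that(1) z] by auto
      show ?thesis unfolding s_def using i c d by simp
    qed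
    finally show ?thesis by simp
  qed
  have "gr_mult G (s a) (s b) z = gr_mult G (s b) (s a) z"
    using sk skew[OF a] skew[OF b] unfolding skew_commutative_def by metis
  then have eq: "(if a \<otimes> b = z then 1 else 0) - (if a \<otimes> \<phi> b = z then 1 else 0)
      - (if \<phi> a \<otimes> b = z then 1 else 0) + (if \<phi> a \<otimes> \<phi> b = z then (1::'r) else 0)
     = (if b \<otimes> a = z then 1 else 0) - (if b \<otimes> \<phi> a = z then 1 else 0)
      - (if \<phi> b \<otimes> a = z then 1 else 0) + (if \<phi> b \<otimes> \<phi> a = z then 1 else 0)"
    using mult[OF a b] mult[OF b a] by simp
  have oi: "(of_nat (ind w z) :: 'r) = (if w = z then 1 else 0)" for w
    by (simp add: ind_def)
  have "(of_nat (cntA G \<phi> a b z) :: 'r) = of_nat (cntB G \<phi> a b z)"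
    unfolding cntA_def cntB_def of_nat_add oi using eq by (simp add: algebra_simps)
  then show ?thesis using ch by (metis of_nat_eq_iff_mod3)
qed

locale invol3 = invol_group +
  assumes pc: "\<lbrakk>a \<in> carrier G; \<phi> a \<noteq> a; b \<in> carrier G; \<phi> b \<noteq> b; z \<in> carrier G\<rbrakk>
     \<Longrightarrow> cntA G \<phi> a b z mod 3 = cntB G \<phi> a b z mod 3"
begin

lemma sq_eq_cube_eq:
  assumes g: "g \<in> carrier G" and x: "x \<in> carrier G" and ng: "x \<noteq> g"
    and sq: "x \<otimes> x = g \<otimes> g" and cu: "x \<otimes> x \<otimes> x = g \<otimes> g \<otimes> g"
  shows False
proof -
  have "g \<otimes> g \<otimes> x = g \<otimes> g \<otimes> g" using cu sq by simp
  then have "x = g" using g x by (simp add: m_assoc)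
  then show False using ng by simp
qed

lemma C2_false:
  assumes g: "g \<in> carrier G" and h: "h \<in> carrier G" and ng: "\<phi> g \<noteq> g" and nh: "\<phi> h \<noteq> h"
    and nc: "g \<otimes> h \<noteq> h \<otimes> g"
    and f1: "\<phi> (g \<otimes> h) = g \<otimes> h" and c: "h \<otimes> \<phi> g = \<phi> g \<otimes> h"
    and g3: "\<phi> (g \<otimes> g \<otimes> g) = g \<otimes> g \<otimes> g"
  shows False
proof -
  define x where "x = \<phi> g"
  define y where "y = \<phi> h"
  have xc: "x \<in> carrier G" and yc: "y \<in> carrier G" using g h by (auto simp: x_def y_def)
  have E1: "y \<otimes> x = g \<otimes> h" using f1 g h by (simp add: phi_mult x_def y_def)
  have c': "h \<otimes> x = x \<otimes> h" using c by (simp add: x_def)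
  have E3: "g \<otimes> y = y \<otimes> g"
  proof -
    have "\<phi> (h \<otimes> x) = \<phi> (x \<otimes> h)" using c' by simp
    then show ?thesis using g h by (simp add: phi_mult x_def y_def)
  qed
  have nix: "\<phi> (inv g) \<noteq> inv g" using g ng by (metis phi_inv inv_inv phi_closed)
  have pix: "\<phi> (inv g) = inv x" using g by (simp add: phi_inv x_def)
  have F1: "h \<otimes> inv x = inv x \<otimes> h" using comm_inv_right[OF h xc c'] .
  have F2: "y \<otimes> inv g = inv g \<otimes> y" using comm_inv_right[OF yc g E3[symmetric]] .
  have N1: "h \<otimes> inv g \<noteq> inv g \<otimes> h"
  proof
    assume "h \<otimes> inv g = inv g \<otimes> h"
    then have "g \<otimes> (h \<otimes> inv g) \<otimes> g = g \<otimes> (inv g \<otimes> h) \<otimes> g" by simp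
    then have "g \<otimes> h = h \<otimes> g" using g h by (simp add: m_assoc)
    then show False using nc by simp
  qed
  have N2: "inv g \<otimes> y \<noteq> inv g \<otimes> h" using g h yc nh by (simp add: y_def)
  have N3: "inv x \<otimes> h \<noteq> inv g \<otimes> h" using g h xc ng by (simp add: x_def)
  have key: "y \<otimes> inv x = inv g \<otimes> h"
  proof (rule ccontr)
    assume A: "y \<otimes> inv x \<noteq> inv g \<otimes> h"
    have "cntA G \<phi> (inv g) h (inv g \<otimes> h) mod 3 = cntB G \<phi> (inv g) h (inv g \<otimes> h) mod 3"
      using pc[OF inv_closed[OF g] nix h nh] g h by simp
    then show False using A N1 N2 N3 F1 F2
      unfolding cntA_def cntB_def ind_def pix y_def[symmetric] by (auto split: if_splits)
  qed
  have hx: "h \<otimes> x = g \<otimes> y"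
  proof -
    have "g \<otimes> (y \<otimes> inv x) \<otimes> x = g \<otimes> (inv g \<otimes> h) \<otimes> x" using key by simp
    then show ?thesis using g h xc yc by (simp add: m_assoc)
  qed
  have "x \<otimes> x \<otimes> h = g \<otimes> g \<otimes> h"
  proof -
    have "x \<otimes> x \<otimes> h = h \<otimes> x \<otimes> x" using c' xc h by (metis m_assoc)
    also have "\<dots> = g \<otimes> y \<otimes> x" using hx by simp
    also have "\<dots> = g \<otimes> g \<otimes> h" using E1 g xc yc h by (simp add: m_assoc)
    finally show ?thesis .
  qed
  then have sq: "x \<otimes> x = g \<otimes> g" using g h xc by simp
  have cu: "x \<otimes> x \<otimes> x = g \<otimes> g \<otimes> g" using g3 g by (simp add: phi_cube x_def)
  show False using sq_eq_cube_eq[OF g xc _ sq cu] ng x_def by simp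
qed

lemma C1_false:
  assumes g: "g \<in> carrier G" and h: "h \<in> carrier G" and ng: "\<phi> g \<noteq> g" and nh: "\<phi> h \<noteq> h"
    and f1: "\<phi> (g \<otimes> h) = g \<otimes> h" and f2: "\<phi> (h \<otimes> g) = h \<otimes> g"
    and c3: "h \<otimes> \<phi> g = g \<otimes> \<phi> h" and c4: "\<phi> h \<otimes> g = \<phi> g \<otimes> h"
    and g3: "\<phi> (g \<otimes> g \<otimes> g) = g \<otimes> g \<otimes> g"
  shows False
proof -
  define x where "x = \<phi> g"
  define y where "y = \<phi> h"
  have xc: "x \<in> carrier G" and yc: "y \<in> carrier G" using g h by (auto simp: x_def y_def)
  have E1: "y \<otimes> x = g \<otimes> h" using f1 g h by (simp add: phi_mult x_def y_def)
  have E2: "x \<otimes> y = h \<otimes> g" using f2 g h by (simp add: phi_mult x_def y_def)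
  have hx: "h \<otimes> x = g \<otimes> y" using c3 by (simp add: x_def y_def)
  have yg: "y \<otimes> g = x \<otimes> h" using c4 by (simp add: x_def y_def)
  have cu: "x \<otimes> x \<otimes> x = g \<otimes> g \<otimes> g" using g3 g by (simp add: phi_cube x_def)
  have pa: "\<phi> (g \<otimes> g) = x \<otimes> x" using g by (simp add: phi_mult x_def)
  show False
  proof (cases "\<phi> (g \<otimes> g) = g \<otimes> g")
    case True
    then show False using sq_eq_cube_eq[OF g xc _ _ cu] ng pa x_def by simp
  next
    case False
    have ggc: "g \<otimes> g \<in> carrier G" using g by simp
    have ra: "h \<otimes> (x \<otimes> x) = g \<otimes> g \<otimes> h"
    proof -
      have "g \<otimes> g \<otimes> h = g \<otimes> (y \<otimes> x)" using E1 g h g h xc yc by (metis m_assoc)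
      also have "\<dots> = (g \<otimes> y) \<otimes> x" using g xc yc g h xc yc by (metis m_assoc)
      also have "\<dots> = h \<otimes> (x \<otimes> x)" using hx h xc by (metis m_assoc)
      finally show ?thesis by simp
    qed
    have rb: "x \<otimes> x \<otimes> h = h \<otimes> (g \<otimes> g)"
    proof -
      have "x \<otimes> x \<otimes> h = x \<otimes> (y \<otimes> g)" using yg xc h g h xc yc by (metis m_assoc)
      also have "\<dots> = (x \<otimes> y) \<otimes> g" using g xc yc g h xc yc by (metis m_assoc)
      also have "\<dots> = h \<otimes> (g \<otimes> g)" using E2 h g g h xc yc by (metis m_assoc)
      finally show ?thesis .
    qed
    have rc: "x \<otimes> x \<otimes> y = y \<otimes> (g \<otimes> g)"
    proof -
      have "x \<otimes> x \<otimes> y = x \<otimes> (h \<otimes> g)" using E2 xc yc g h xc yc by (metis m_assoc)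
      also have "\<dots> = (x \<otimes> h) \<otimes> g" using g xc h g h xc yc by (metis m_assoc)
      also have "\<dots> = y \<otimes> (g \<otimes> g)" using yg yc g g h xc yc by (metis m_assoc)
      finally show ?thesis .
    qed
    have rd: "y \<otimes> (x \<otimes> x) = g \<otimes> g \<otimes> y"
    proof -
      have "y \<otimes> (x \<otimes> x) = (y \<otimes> x) \<otimes> x" using xc yc g h xc yc by (metis m_assoc)
      also have "\<dots> = g \<otimes> (h \<otimes> x)" using E1 g h xc g h xc yc by (metis m_assoc)
      also have "\<dots> = g \<otimes> g \<otimes> y" using hx g yc g h xc yc by (metis m_assoc)
      finally show ?thesis .
    qed
    have disj: "g \<otimes> g \<otimes> h = h \<otimes> (g \<otimes> g) \<or> g \<otimes> g \<otimes> h = g \<otimes> g \<otimes> y"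
    proof (rule ccontr)
      assume A: "\<not> ?thesis"
      have "cntA G \<phi> (g \<otimes> g) h (g \<otimes> g \<otimes> h) mod 3 = cntB G \<phi> (g \<otimes> g) h (g \<otimes> g \<otimes> h) mod 3"
        using pc[OF ggc False h nh] g h by simp
      then show False using A
        unfolding cntA_def cntB_def ind_def pa y_def[symmetric] ra rb rc rd by (auto split: if_splits)
    qed
    then show False
    proof
      assume "g \<otimes> g \<otimes> h = h \<otimes> (g \<otimes> g)"
      then have "h \<otimes> (x \<otimes> x) = h \<otimes> (g \<otimes> g)" using ra by simp
      then have "x \<otimes> x = g \<otimes> g" using h xc g by simp
      then show False using sq_eq_cube_eq[OF g xc _ _ cu] ng x_def by simp
    next
      assume "g \<otimes> g \<otimes> h = g \<otimes> g \<otimes> y"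
      then have "h = y" using g h yc by (simp add: m_assoc)
      then show False using nh y_def by simp
    qed
  qed
qed

lemma C3_good:
  assumes g: "g \<in> carrier G" and h: "h \<in> carrier G" and ng: "\<phi> g \<noteq> g" and nh: "\<phi> h \<noteq> h"
    and nc: "g \<otimes> h \<noteq> h \<otimes> g"
    and f1: "\<phi> (g \<otimes> h) = g \<otimes> h" and c1: "h \<otimes> g = \<phi> g \<otimes> h" and c2: "\<phi> g \<otimes> h = g \<otimes> \<phi> h"
  shows "\<phi> (g \<otimes> g \<otimes> g) = g \<otimes> g \<otimes> g \<and> \<phi> (h \<otimes> h \<otimes> h) = h \<otimes> h \<otimes> h \<and>
    (\<forall>w\<in>{g, h, \<phi> g, \<phi> h}. (g \<otimes> g \<otimes> g) \<otimes> w = w \<otimes> (g \<otimes> g \<otimes> g) \<and> (h \<otimes> h \<otimes> h) \<otimes> w = w \<otimes> (h \<otimes> h \<otimes> h))"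
proof -
  define x where "x = \<phi> g"
  define y where "y = \<phi> h"
  have xc: "x \<in> carrier G" and yc: "y \<in> carrier G" using g h by (auto simp: x_def y_def)
  have E1: "y \<otimes> x = g \<otimes> h" using f1 g h by (simp add: phi_mult x_def y_def)
  have hg: "h \<otimes> g = x \<otimes> h" using c1 by (simp add: x_def)
  have xh: "x \<otimes> h = h \<otimes> g" using hg by simp
  have gy: "g \<otimes> y = h \<otimes> g" using c1 c2 by (simp add: x_def y_def)
  have nhx: "h \<otimes> x \<noteq> h \<otimes> g" using h xc g ng by (simp add: x_def)
  have nc': "h \<otimes> g \<noteq> g \<otimes> h" using nc by simp
  have P: "cntA G \<phi> g h z mod 3 = cntB G \<phi> g h z mod 3" if "z \<in> carrier G" for z
    using pc[OF g ng h nh that] .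
  have s1: "x \<otimes> y \<noteq> h \<otimes> g \<and> y \<otimes> g \<noteq> h \<otimes> g"
  proof (rule ccontr)
    assume A: "\<not> ?thesis"
    show False using P[of "h \<otimes> g"] g h A nhx nc nc'
      by (cases "x \<otimes> y = h \<otimes> g"; cases "y \<otimes> g = h \<otimes> g")
        (simp_all add: cntA_def cntB_def ind_def x_def[symmetric] y_def[symmetric] E1 gy xh)
  qed
  have s2: "(x \<otimes> y = g \<otimes> h \<and> h \<otimes> x = g \<otimes> h \<and> y \<otimes> g = g \<otimes> h) \<or>
            (x \<otimes> y \<noteq> g \<otimes> h \<and> h \<otimes> x \<noteq> g \<otimes> h \<and> y \<otimes> g \<noteq> g \<otimes> h)"
  proof (rule ccontr)
    assume A: "\<not> ?thesis"
    show False using P[of "g \<otimes> h"] g h A nhx nc nc'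
      by (cases "x \<otimes> y = g \<otimes> h"; cases "h \<otimes> x = g \<otimes> h"; cases "y \<otimes> g = g \<otimes> h")
        (simp_all add: cntA_def cntB_def ind_def x_def[symmetric] y_def[symmetric] E1 gy xh)
  qed
  have R: "x \<otimes> y = h \<otimes> x \<and> y \<otimes> g = h \<otimes> x"
    using s2
  proof
    assume "x \<otimes> y = g \<otimes> h \<and> h \<otimes> x = g \<otimes> h \<and> y \<otimes> g = g \<otimes> h"
    then show ?thesis by simp
  next
    assume B: "x \<otimes> y \<noteq> g \<otimes> h \<and> h \<otimes> x \<noteq> g \<otimes> h \<and> y \<otimes> g \<noteq> g \<otimes> h"
    show ?thesis
    proof (rule ccontr)
      assume A: "\<not> ?thesis"
      have B': "g \<otimes> h \<noteq> x \<otimes> y" "h \<otimes> g \<noteq> x \<otimes> y" using B s1 by auto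
      show False using P[of "x \<otimes> y"] xc yc A B B' s1 nhx nc nc'
        by (cases "h \<otimes> x = x \<otimes> y"; cases "y \<otimes> g = x \<otimes> y")
          (simp_all add: cntA_def cntB_def ind_def x_def[symmetric] y_def[symmetric] E1 gy xh)
    qed
  qed
  have xy: "x \<otimes> y = h \<otimes> x" and yg: "y \<otimes> g = h \<otimes> x" using R by auto
  have hx: "h \<otimes> x = y \<otimes> g" using yg by simp
  have xy': "x \<otimes> y = y \<otimes> g" using xy yg by simp
  have xg: "x \<otimes> g = g \<otimes> x"
  proof -
    have "(x \<otimes> g) \<otimes> y = x \<otimes> (g \<otimes> y)" using g xc yc by (simp add: m_assoc)
    also have "\<dots> = x \<otimes> (h \<otimes> g)" by (simp only: gy)
    also have "\<dots> = (x \<otimes> h) \<otimes> g" using g xc h by (simp add: m_assoc)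
    also have "\<dots> = (h \<otimes> g) \<otimes> g" by (simp only: xh)
    also have "\<dots> = (g \<otimes> y) \<otimes> g" by (simp only: gy)
    also have "\<dots> = g \<otimes> (y \<otimes> g)" using g yc by (simp add: m_assoc)
    also have "\<dots> = g \<otimes> (x \<otimes> y)" by (simp only: xy')
    also have "\<dots> = (g \<otimes> x) \<otimes> y" using g xc yc by (simp add: m_assoc)
    finally show ?thesis using xc g yc by simp
  qed
  have i1: "g \<otimes> h \<otimes> x = h \<otimes> g \<otimes> g"
  proof -
    have "g \<otimes> h \<otimes> x = g \<otimes> (h \<otimes> x)" using g h xc by (simp add: m_assoc)
    also have "\<dots> = g \<otimes> (y \<otimes> g)" by (simp only: hx)
    also have "\<dots> = (g \<otimes> y) \<otimes> g" using g yc by (simp add: m_assoc)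
    also have "\<dots> = h \<otimes> g \<otimes> g" by (simp only: gy)
    finally show ?thesis .
  qed
  have i2: "g \<otimes> g \<otimes> h = h \<otimes> g \<otimes> x"
  proof -
    have "g \<otimes> g \<otimes> h = g \<otimes> (g \<otimes> h)" using g h by (simp add: m_assoc)
    also have "\<dots> = g \<otimes> (y \<otimes> x)" by (simp only: E1)
    also have "\<dots> = (g \<otimes> y) \<otimes> x" using g yc xc by (simp add: m_assoc)
    also have "\<dots> = h \<otimes> g \<otimes> x" by (simp only: gy)
    finally show ?thesis .
  qed
  define c where "c = inv h \<otimes> g \<otimes> h"
  have cc_: "c \<in> carrier G" using g h by (simp add: c_def)
  have cx: "c \<otimes> x = g \<otimes> g"
  proof -
    have "c \<otimes> x = inv h \<otimes> (g \<otimes> h \<otimes> x)" using g h xc by (simp add: c_def m_assoc)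
    also have "\<dots> = g \<otimes> g" using i1 g h by (simp add: m_assoc)
    finally show ?thesis .
  qed
  have ccc: "c \<otimes> c = g \<otimes> x"
  proof -
    have "c \<otimes> c = inv h \<otimes> (g \<otimes> g \<otimes> h)" using g h by (simp add: c_def m_assoc)
    also have "\<dots> = g \<otimes> x" using i2 g h xc by (simp add: m_assoc)
    finally show ?thesis .
  qed
  have xcc: "x \<otimes> c = c \<otimes> x"
  proof -
    have ce: "c = g \<otimes> g \<otimes> inv x"
    proof -
      have "c = c \<otimes> x \<otimes> inv x" using cc_ xc by (simp add: m_assoc)
      then show ?thesis using cx by simp
    qed
    have "x \<otimes> c = x \<otimes> g \<otimes> (g \<otimes> inv x)" using ce g xc by (simp add: m_assoc)
    also have "\<dots> = g \<otimes> x \<otimes> (g \<otimes> inv x)" using xg by simp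
    also have "\<dots> = g \<otimes> (x \<otimes> g) \<otimes> inv x" using g xc by (simp add: m_assoc)
    also have "\<dots> = g \<otimes> (g \<otimes> x) \<otimes> inv x" using xg by simp
    also have "\<dots> = g \<otimes> g" using g xc by (simp add: m_assoc)
    finally show ?thesis using cx by simp
  qed
  have cu: "x \<otimes> x \<otimes> x = g \<otimes> g \<otimes> g"
  proof -
    have "g \<otimes> (g \<otimes> g \<otimes> g) = (g \<otimes> g) \<otimes> (g \<otimes> g)" using g by (simp add: m_assoc)
    also have "\<dots> = (c \<otimes> x) \<otimes> (c \<otimes> x)" using cx by simp
    also have "\<dots> = c \<otimes> (x \<otimes> c) \<otimes> x" using cc_ xc by (simp add: m_assoc)
    also have "\<dots> = c \<otimes> (c \<otimes> x) \<otimes> x" using xcc by simp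
    also have "\<dots> = (c \<otimes> c) \<otimes> (x \<otimes> x)" using cc_ xc by (simp add: m_assoc)
    also have "\<dots> = g \<otimes> (x \<otimes> x \<otimes> x)" using ccc g xc by (simp add: m_assoc)
    finally show ?thesis using g xc by simp
  qed
  define d where "d = x \<otimes> inv g"
  have dc: "d \<in> carrier G" using xc g by (simp add: d_def)
  have dgx: "d \<otimes> g = x" using xc g by (simp add: d_def m_assoc)
  have dg: "d \<otimes> g = g \<otimes> d"
  proof -
    have "g \<otimes> d = (g \<otimes> x) \<otimes> inv g" using g xc by (simp add: d_def m_assoc)
    also have "\<dots> = (x \<otimes> g) \<otimes> inv g" using xg by simp
    also have "\<dots> = x" using g xc by (simp add: m_assoc)
    finally show ?thesis using dgx by simp
  qed
  have dh: "d \<otimes> h = h \<otimes> d"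
  proof -
    have ig: "inv g \<otimes> h = y \<otimes> inv g"
    proof -
      have "inv g \<otimes> h = inv g \<otimes> (h \<otimes> g) \<otimes> inv g" using g h by (simp add: m_assoc)
      also have "\<dots> = inv g \<otimes> (g \<otimes> y) \<otimes> inv g" using gy by simp
      also have "\<dots> = y \<otimes> inv g" using g yc by (simp add: m_assoc)
      finally show ?thesis .
    qed
    have "d \<otimes> h = x \<otimes> (inv g \<otimes> h)" using xc g h by (simp add: d_def m_assoc)
    also have "\<dots> = x \<otimes> y \<otimes> inv g" using ig xc yc g by (simp add: m_assoc)
    also have "\<dots> = h \<otimes> d" using xy h xc g by (simp add: d_def m_assoc)
    finally show ?thesis .
  qed
  have d3: "d \<otimes> d \<otimes> d = \<one>"
  proof -
    have "(d \<otimes> d \<otimes> d) \<otimes> (g \<otimes> g \<otimes> g) = g \<otimes> g \<otimes> g"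
      using cube_mult_comm[OF dc g dg] dgx cu by simp
    then show ?thesis using dc g by simp
  qed
  have core1: "(g \<otimes> g \<otimes> g) \<otimes> h = h \<otimes> (g \<otimes> g \<otimes> g)" "(h \<otimes> h \<otimes> h) \<otimes> g = g \<otimes> (h \<otimes> h \<otimes> h)"
    using core[OF dc g h dg dh d3] hg dgx by auto
  have G3: "\<phi> (g \<otimes> g \<otimes> g) = g \<otimes> g \<otimes> g" using cu g by (simp add: phi_cube x_def)
  have H3: "\<phi> (h \<otimes> h \<otimes> h) = h \<otimes> h \<otimes> h"
  proof -
    have "g \<otimes> (y \<otimes> y \<otimes> y) = g \<otimes> (h \<otimes> h \<otimes> h)" using cube_conj[OF g h yc gy] core1(2) by simp
    then show ?thesis using g h yc by (simp add: phi_cube y_def)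
  qed
  have yeq: "y = inv g \<otimes> (h \<otimes> g)"
  proof -
    have "y = inv g \<otimes> (g \<otimes> y)" using g yc by simp
    then show ?thesis using gy by simp
  qed
  have gc: "g \<otimes> g \<otimes> g \<in> carrier G" and hc: "h \<otimes> h \<otimes> h \<in> carrier G" using g h by auto
  have Gg: "(g \<otimes> g \<otimes> g) \<otimes> g = g \<otimes> (g \<otimes> g \<otimes> g)" using g by (simp add: m_assoc)
  have Hh: "(h \<otimes> h \<otimes> h) \<otimes> h = h \<otimes> (h \<otimes> h \<otimes> h)" using h by (simp add: m_assoc)
  have Gx: "(g \<otimes> g \<otimes> g) \<otimes> x = x \<otimes> (g \<otimes> g \<otimes> g)" using comm_cube[OF g xc] xg by simp
  have Gy: "(g \<otimes> g \<otimes> g) \<otimes> y = y \<otimes> (g \<otimes> g \<otimes> g)"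
    using yeq comm_mult_right[OF gc inv_closed[OF g] m_closed[OF h g] comm_inv_right[OF gc g Gg]
        comm_mult_right[OF gc h g core1(1) Gg]] by simp
  have Hd: "(h \<otimes> h \<otimes> h) \<otimes> d = d \<otimes> (h \<otimes> h \<otimes> h)" using comm_cube[OF h dc] dh by simp
  have Hg: "(h \<otimes> h \<otimes> h) \<otimes> g = g \<otimes> (h \<otimes> h \<otimes> h)" using core1(2) .
  have Hx: "(h \<otimes> h \<otimes> h) \<otimes> x = x \<otimes> (h \<otimes> h \<otimes> h)"
    using comm_mult_right[OF hc dc g Hd Hg] dgx by simp
  have Hy: "(h \<otimes> h \<otimes> h) \<otimes> y = y \<otimes> (h \<otimes> h \<otimes> h)"
    using yeq comm_mult_right[OF hc inv_closed[OF g] m_closed[OF h g] comm_inv_right[OF hc g Hg]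
        comm_mult_right[OF hc h g Hh Hg]] by simp
  show ?thesis using G3 H3 Gg Gx Gy core1 Hh Hg Hx Hy by (auto simp: x_def[symmetric] y_def[symmetric])
qed

lemma C4_good:
  assumes g: "g \<in> carrier G" and h: "h \<in> carrier G" and ng: "\<phi> g \<noteq> g" and nh: "\<phi> h \<noteq> h"
    and c1: "g \<otimes> h = h \<otimes> \<phi> g" and c2: "h \<otimes> \<phi> g = \<phi> g \<otimes> \<phi> h" and c3: "\<phi> h \<otimes> g = \<phi> g \<otimes> h"
  shows "\<phi> (g \<otimes> g \<otimes> g) = g \<otimes> g \<otimes> g \<and> \<phi> (h \<otimes> h \<otimes> h) = h \<otimes> h \<otimes> h \<and>
    (\<forall>w\<in>{g, h, \<phi> g, \<phi> h}. (g \<otimes> g \<otimes> g) \<otimes> w = w \<otimes> (g \<otimes> g \<otimes> g) \<and> (h \<otimes> h \<otimes> h) \<otimes> w = w \<otimes> (h \<otimes> h \<otimes> h))"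
proof -
  define x where "x = \<phi> g"
  define y where "y = \<phi> h"
  have xc: "x \<in> carrier G" and yc: "y \<in> carrier G" using g h by (auto simp: x_def y_def)
  have phx: "\<phi> x = g" and phy: "\<phi> y = h" using g h by (auto simp: x_def y_def)
  have gh: "g \<otimes> h = h \<otimes> x" using c1 by (simp add: x_def)
  have hxy: "h \<otimes> x = x \<otimes> y" using c2 by (simp add: x_def y_def)
  have yg: "y \<otimes> g = x \<otimes> h" using c3 by (simp add: x_def y_def)
  have gy: "g \<otimes> y = h \<otimes> g"
  proof -
    have "\<phi> (h \<otimes> x) = \<phi> (x \<otimes> y)" using hxy by simp
    then show ?thesis using h xc yc by (simp add: phi_mult phx phy y_def[symmetric])
  qed
  define a where "a = g \<otimes> inv x \<otimes> g"
  have ac: "a \<in> carrier G" using g xc by (simp add: a_def)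
  have F1: "a \<otimes> h = h \<otimes> g"
  proof -
    have "a \<otimes> h = g \<otimes> (inv x \<otimes> (g \<otimes> h))" using g h xc by (simp add: a_def m_assoc)
    also have "\<dots> = g \<otimes> (inv x \<otimes> (x \<otimes> y))" using gh hxy by simp
    also have "\<dots> = g \<otimes> y" using xc yc by simp
    finally show ?thesis using gy by simp
  qed
  have F2: "h \<otimes> g \<otimes> g = g \<otimes> x \<otimes> h"
  proof -
    have "g \<otimes> x \<otimes> h = g \<otimes> (x \<otimes> h)" using g xc h by (simp add: m_assoc)
    also have "\<dots> = g \<otimes> (y \<otimes> g)" by (simp only: yg)
    also have "\<dots> = (g \<otimes> y) \<otimes> g" using g yc by (simp add: m_assoc)
    also have "\<dots> = h \<otimes> g \<otimes> g" by (simp only: gy)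
    finally show ?thesis by simp
  qed
  have aa: "a \<otimes> a = g \<otimes> x"
  proof -
    have "a \<otimes> a \<otimes> h = a \<otimes> (a \<otimes> h)" using ac h by (simp add: m_assoc)
    also have "\<dots> = a \<otimes> (h \<otimes> g)" by (simp only: F1)
    also have "\<dots> = (a \<otimes> h) \<otimes> g" using ac h g by (simp add: m_assoc)
    also have "\<dots> = h \<otimes> g \<otimes> g" by (simp only: F1)
    also have "\<dots> = g \<otimes> x \<otimes> h" by (rule F2)
    finally show ?thesis using ac g xc h by simp
  qed
  have E1: "g \<otimes> (g \<otimes> (inv x \<otimes> g)) = x \<otimes> x"
  proof -
    have "g \<otimes> (inv x \<otimes> (g \<otimes> (g \<otimes> (inv x \<otimes> g)))) = g \<otimes> x"
      using aa g xc by (simp add: a_def m_assoc)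
    then have "inv x \<otimes> (g \<otimes> (g \<otimes> (inv x \<otimes> g))) = x" using g xc by simp
    then have "x \<otimes> (inv x \<otimes> (g \<otimes> (g \<otimes> (inv x \<otimes> g)))) = x \<otimes> x" by simp
    then show ?thesis using g xc by simp
  qed
  have E2: "x \<otimes> (inv g \<otimes> (x \<otimes> x)) = g \<otimes> g"
  proof -
    have "\<phi> (g \<otimes> (g \<otimes> (inv x \<otimes> g))) = \<phi> (x \<otimes> x)" using E1 by simp
    then show ?thesis using g xc by (simp add: phi_mult phi_inv phx m_assoc x_def[symmetric])
  qed
  have xg: "g \<otimes> x = x \<otimes> g"
  proof -
    have "g \<otimes> g = x \<otimes> (inv g \<otimes> (g \<otimes> (g \<otimes> (inv x \<otimes> g))))" using E2 E1 by simp
    also have "\<dots> = (x \<otimes> g \<otimes> inv x) \<otimes> g" using g xc by (simp add: m_assoc)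
    finally have "g = x \<otimes> g \<otimes> inv x" using g xc by simp
    then have "g \<otimes> x = x \<otimes> g \<otimes> inv x \<otimes> x" by simp
    then show ?thesis using g xc by (simp add: m_assoc)
  qed
  have ixg: "g \<otimes> inv x = inv x \<otimes> g" using comm_inv_right[OF g xc xg] .
  have cu: "x \<otimes> x \<otimes> x = g \<otimes> g \<otimes> g"
  proof -
    have "x \<otimes> x = g \<otimes> (g \<otimes> (g \<otimes> inv x))" using E1 ixg by simp
    then have "x \<otimes> x \<otimes> x = g \<otimes> (g \<otimes> (g \<otimes> inv x)) \<otimes> x" by simp
    then show ?thesis using g xc by (simp add: m_assoc)
  qed
  define d where "d = g \<otimes> inv x"
  have dc: "d \<in> carrier G" using xc g by (simp add: d_def)
  have dx: "d \<otimes> x = g" using xc g by (simp add: d_def m_assoc)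
  have xdd: "x = inv d \<otimes> g" using dx dc xc by (metis inv_cancel_left)
  have dg: "d \<otimes> g = g \<otimes> d"
  proof -
    have "d \<otimes> g = g \<otimes> (inv x \<otimes> g)" using g xc by (simp add: d_def m_assoc)
    also have "\<dots> = g \<otimes> (g \<otimes> inv x)" using ixg by simp
    finally show ?thesis by (simp add: d_def)
  qed
  have dxc: "d \<otimes> x = x \<otimes> d"
  proof -
    have "x \<otimes> d = (x \<otimes> g) \<otimes> inv x" using g xc by (simp add: d_def m_assoc)
    also have "\<dots> = (g \<otimes> x) \<otimes> inv x" using xg by simp
    also have "\<dots> = g" using g xc by (simp add: m_assoc)
    finally show ?thesis using dx by simp
  qed
  have dh: "d \<otimes> h = h \<otimes> d"
  proof -
    have ix: "inv x \<otimes> h = y \<otimes> inv x"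
    proof -
      have "inv x \<otimes> h = inv x \<otimes> (h \<otimes> x) \<otimes> inv x" using xc h by (simp add: m_assoc)
      also have "\<dots> = inv x \<otimes> (x \<otimes> y) \<otimes> inv x" using hxy by simp
      also have "\<dots> = y \<otimes> inv x" using xc yc by (simp add: m_assoc)
      finally show ?thesis .
    qed
    have "d \<otimes> h = g \<otimes> (inv x \<otimes> h)" using xc g h by (simp add: d_def m_assoc)
    also have "\<dots> = g \<otimes> (y \<otimes> inv x)" using ix by simp
    also have "\<dots> = (g \<otimes> y) \<otimes> inv x" using g yc xc by (simp add: m_assoc)
    also have "\<dots> = (h \<otimes> g) \<otimes> inv x" using gy by simp
    also have "\<dots> = h \<otimes> d" using h g xc by (simp add: d_def m_assoc)
    finally show ?thesis .
  qed
  have d3: "d \<otimes> d \<otimes> d = \<one>"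
  proof -
    have "(d \<otimes> d \<otimes> d) \<otimes> (x \<otimes> x \<otimes> x) = x \<otimes> x \<otimes> x"
      using cube_mult_comm[OF dc xc dxc] dx cu by simp
    then show ?thesis using dc xc by simp
  qed
  have hgd: "h \<otimes> g = d \<otimes> g \<otimes> h"
  proof -
    have "d \<otimes> g = a" using g xc by (simp add: d_def a_def)
    then show ?thesis using F1 by simp
  qed
  have core1: "(g \<otimes> g \<otimes> g) \<otimes> h = h \<otimes> (g \<otimes> g \<otimes> g)" "(h \<otimes> h \<otimes> h) \<otimes> g = g \<otimes> (h \<otimes> h \<otimes> h)"
    using core[OF dc g h dg dh d3 hgd] by auto
  have G3: "\<phi> (g \<otimes> g \<otimes> g) = g \<otimes> g \<otimes> g" using cu g by (simp add: phi_cube x_def)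
  have H3: "\<phi> (h \<otimes> h \<otimes> h) = h \<otimes> h \<otimes> h"
  proof -
    have "g \<otimes> (y \<otimes> y \<otimes> y) = g \<otimes> (h \<otimes> h \<otimes> h)" using cube_conj[OF g h yc gy] core1(2) by simp
    then show ?thesis using g h yc by (simp add: phi_cube y_def)
  qed
  have yeq: "y = inv g \<otimes> (h \<otimes> g)"
  proof -
    have "y = inv g \<otimes> (g \<otimes> y)" using g yc by simp
    then show ?thesis using gy by simp
  qed
  have gc: "g \<otimes> g \<otimes> g \<in> carrier G" and hc: "h \<otimes> h \<otimes> h \<in> carrier G" using g h by auto
  have Gg: "(g \<otimes> g \<otimes> g) \<otimes> g = g \<otimes> (g \<otimes> g \<otimes> g)" using g by (simp add: m_assoc)
  have Hh: "(h \<otimes> h \<otimes> h) \<otimes> h = h \<otimes> (h \<otimes> h \<otimes> h)" using h by (simp add: m_assoc)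
  have Gx: "(g \<otimes> g \<otimes> g) \<otimes> x = x \<otimes> (g \<otimes> g \<otimes> g)" using comm_cube[OF g xc] xg by simp
  have Gy: "(g \<otimes> g \<otimes> g) \<otimes> y = y \<otimes> (g \<otimes> g \<otimes> g)"
    using yeq comm_mult_right[OF gc inv_closed[OF g] m_closed[OF h g] comm_inv_right[OF gc g Gg]
        comm_mult_right[OF gc h g core1(1) Gg]] by simp
  have Hd: "(h \<otimes> h \<otimes> h) \<otimes> d = d \<otimes> (h \<otimes> h \<otimes> h)" using comm_cube[OF h dc] dh by simp
  have Hg: "(h \<otimes> h \<otimes> h) \<otimes> g = g \<otimes> (h \<otimes> h \<otimes> h)" using core1(2) .
  have Hx: "(h \<otimes> h \<otimes> h) \<otimes> x = x \<otimes> (h \<otimes> h \<otimes> h)"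
    using comm_mult_right[OF hc inv_closed[OF dc] g comm_inv_right[OF hc dc Hd] Hg] xdd by simp
  have Hy: "(h \<otimes> h \<otimes> h) \<otimes> y = y \<otimes> (h \<otimes> h \<otimes> h)"
    using yeq comm_mult_right[OF hc inv_closed[OF g] m_closed[OF h g] comm_inv_right[OF hc g Hg]
        comm_mult_right[OF hc h g Hh Hg]] by simp
  show ?thesis using G3 H3 Gg Gx Gy core1 Hh Hg Hx Hy by (auto simp: x_def[symmetric] y_def[symmetric])
qed

lemma C5_good:
  assumes g: "g \<in> carrier G" and h: "h \<in> carrier G" and ng: "\<phi> g \<noteq> g" and nh: "\<phi> h \<noteq> h"
    and c1: "g \<otimes> h = \<phi> h \<otimes> g" and c2: "\<phi> h \<otimes> g = \<phi> g \<otimes> \<phi> h" and c3: "h \<otimes> \<phi> g = g \<otimes> \<phi> h"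
  shows "\<phi> (g \<otimes> g \<otimes> g) = g \<otimes> g \<otimes> g \<and> \<phi> (h \<otimes> h \<otimes> h) = h \<otimes> h \<otimes> h \<and>
    (\<forall>w\<in>{g, h, \<phi> g, \<phi> h}. (g \<otimes> g \<otimes> g) \<otimes> w = w \<otimes> (g \<otimes> g \<otimes> g) \<and> (h \<otimes> h \<otimes> h) \<otimes> w = w \<otimes> (h \<otimes> h \<otimes> h))"
proof -
  define x where "x = \<phi> g"
  define y where "y = \<phi> h"
  have xc: "x \<in> carrier G" and yc: "y \<in> carrier G" using g h by (auto simp: x_def y_def)
  have phx: "\<phi> x = g" and phy: "\<phi> y = h" using g h by (auto simp: x_def y_def)
  have A: "g \<otimes> h = y \<otimes> g" using c1 by (simp add: y_def)
  have B: "y \<otimes> g = x \<otimes> y" using c2 by (simp add: x_def y_def)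
  have C: "h \<otimes> x = g \<otimes> y" using c3 by (simp add: x_def y_def)
  have D: "y \<otimes> x = h \<otimes> g"
  proof -
    have "\<phi> (g \<otimes> h) = \<phi> (x \<otimes> y)" using A B by simp
    then show ?thesis using g h xc yc by (simp add: phi_mult phx phy x_def[symmetric] y_def[symmetric])
  qed
  have G1: "h \<otimes> (g \<otimes> y) = y \<otimes> y \<otimes> g"
  proof -
    have "h \<otimes> (g \<otimes> y) = (h \<otimes> g) \<otimes> y" using g h yc by (simp add: m_assoc)
    also have "\<dots> = (y \<otimes> x) \<otimes> y" using D by simp
    also have "\<dots> = y \<otimes> (x \<otimes> y)" using xc yc by (simp add: m_assoc)
    also have "\<dots> = y \<otimes> (y \<otimes> g)" using B by simp
    also have "\<dots> = y \<otimes> y \<otimes> g" using g yc by (simp add: m_assoc)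
    finally show ?thesis .
  qed
  have xeq: "x = inv y \<otimes> (h \<otimes> g)"
  proof -
    have "x = inv y \<otimes> (y \<otimes> x)" using xc yc by simp
    then show ?thesis using D by simp
  qed
  have E1: "h \<otimes> h \<otimes> inv y \<otimes> h = y \<otimes> y"
  proof -
    have "h \<otimes> (g \<otimes> y) = h \<otimes> (h \<otimes> x)" using C by simp
    also have "\<dots> = (h \<otimes> h \<otimes> inv y \<otimes> h) \<otimes> g" using xeq g h yc by (simp add: m_assoc)
    finally show ?thesis using G1 g h yc by simp
  qed
  have E2: "y \<otimes> inv h \<otimes> y \<otimes> y = h \<otimes> h"
  proof -
    have "\<phi> (h \<otimes> h \<otimes> inv y \<otimes> h) = \<phi> (y \<otimes> y)" using E1 by simp
    then show ?thesis using h yc by (simp add: phi_mult phi_inv phy m_assoc y_def[symmetric])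
  qed
  have hy: "h \<otimes> y = y \<otimes> h"
  proof -
    have "y \<otimes> y = h \<otimes> h \<otimes> inv y \<otimes> h" using E1 by simp
    also have "\<dots> = y \<otimes> inv h \<otimes> y \<otimes> y \<otimes> inv y \<otimes> h" using E2 by simp
    also have "\<dots> = y \<otimes> (inv h \<otimes> y \<otimes> h)" using h yc by (simp add: m_assoc)
    finally have "y = inv h \<otimes> y \<otimes> h" using h yc by simp
    then have "h \<otimes> y = h \<otimes> (inv h \<otimes> y \<otimes> h)" by simp
    then show ?thesis using h yc by (simp add: m_assoc)
  qed
  have iyh: "h \<otimes> inv y = inv y \<otimes> h" using comm_inv_right[OF h yc hy] .
  have cu: "y \<otimes> y \<otimes> y = h \<otimes> h \<otimes> h"
  proof -
    have "y \<otimes> y = h \<otimes> h \<otimes> (inv y \<otimes> h)" using E1 h yc by (simp add: m_assoc)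
    also have "\<dots> = h \<otimes> h \<otimes> (h \<otimes> inv y)" using iyh by simp
    finally have "y \<otimes> y \<otimes> y = h \<otimes> h \<otimes> (h \<otimes> inv y) \<otimes> y" by simp
    then show ?thesis using h yc by (simp add: m_assoc)
  qed
  define d where "d = y \<otimes> inv h"
  have dc: "d \<in> carrier G" using yc h by (simp add: d_def)
  have dhy: "d \<otimes> h = y" using yc h by (simp add: d_def m_assoc)
  have dh: "d \<otimes> h = h \<otimes> d"
  proof -
    have "h \<otimes> d = (h \<otimes> y) \<otimes> inv h" using h yc by (simp add: d_def m_assoc)
    also have "\<dots> = (y \<otimes> h) \<otimes> inv h" using hy by simp
    also have "\<dots> = y" using h yc by (simp add: m_assoc)
    finally show ?thesis using dhy by simp
  qed
  have d3: "d \<otimes> d \<otimes> d = \<one>"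
  proof -
    have "(d \<otimes> d \<otimes> d) \<otimes> (h \<otimes> h \<otimes> h) = h \<otimes> h \<otimes> h"
      using cube_mult_comm[OF dc h dh] dhy cu by simp
    then show ?thesis using dc h by simp
  qed
  have uv: "h \<otimes> inv y \<otimes> h = y \<otimes> inv h \<otimes> y"
  proof -
    have "h \<otimes> (h \<otimes> inv y \<otimes> h) = y \<otimes> y" using E1 h yc by (simp add: m_assoc)
    moreover have "h \<otimes> (y \<otimes> inv h \<otimes> y) = y \<otimes> y"
    proof -
      have "h \<otimes> (y \<otimes> inv h \<otimes> y) = (h \<otimes> y) \<otimes> inv h \<otimes> y" using h yc by (simp add: m_assoc)
      also have "\<dots> = (y \<otimes> h) \<otimes> inv h \<otimes> y" using hy by simp
      also have "\<dots> = y \<otimes> y" using h yc by (simp add: m_assoc)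
      finally show ?thesis .
    qed
    ultimately have "h \<otimes> (h \<otimes> inv y \<otimes> h) = h \<otimes> (y \<otimes> inv h \<otimes> y)" by simp
    moreover have "h \<otimes> inv y \<otimes> h \<in> carrier G" "y \<otimes> inv h \<otimes> y \<in> carrier G" using h yc by auto
    ultimately show ?thesis using left_cancel_iff[OF h] by blast
  qed
  have dg: "d \<otimes> g = g \<otimes> d"
  proof -
    have "g \<otimes> d \<otimes> h = g \<otimes> y" using dhy g dc h by (simp add: m_assoc)
    also have "\<dots> = h \<otimes> x" using C by simp
    also have "\<dots> = (h \<otimes> inv y \<otimes> h) \<otimes> g" using xeq g h yc by (simp add: m_assoc)
    also have "\<dots> = (y \<otimes> inv h \<otimes> y) \<otimes> g" using uv by simp
    also have "\<dots> = y \<otimes> inv h \<otimes> (y \<otimes> g)" using g h yc by (simp add: m_assoc)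
    also have "\<dots> = y \<otimes> inv h \<otimes> (g \<otimes> h)" using A by simp
    also have "\<dots> = d \<otimes> g \<otimes> h" using g h yc by (simp add: d_def m_assoc)
    finally show ?thesis using g dc h by simp
  qed
  have ghd: "g \<otimes> h = d \<otimes> h \<otimes> g" using A dhy by simp
  have core1: "(h \<otimes> h \<otimes> h) \<otimes> g = g \<otimes> (h \<otimes> h \<otimes> h)" "(g \<otimes> g \<otimes> g) \<otimes> h = h \<otimes> (g \<otimes> g \<otimes> g)"
    using core[OF dc h g dh dg d3 ghd] by auto
  have xd: "x = inv d \<otimes> g"
  proof -
    have "inv d = h \<otimes> inv y" using h yc by (simp add: d_def inv_mult_group)
    then have "inv d \<otimes> g = inv y \<otimes> h \<otimes> g" using iyh by simp
    then show ?thesis using xeq g h yc by (simp add: m_assoc)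
  qed
  have dxg: "d \<otimes> x = g" using xd dc g by simp
  have dxc: "d \<otimes> x = x \<otimes> d"
  proof -
    have "x \<otimes> d = inv d \<otimes> (g \<otimes> d)" using xd dc g by (simp add: m_assoc)
    also have "\<dots> = inv d \<otimes> (d \<otimes> g)" using dg by simp
    also have "\<dots> = g" using dc g by simp
    finally show ?thesis using dxg by simp
  qed
  have cux: "x \<otimes> x \<otimes> x = g \<otimes> g \<otimes> g"
  proof -
    have "(d \<otimes> d \<otimes> d) \<otimes> (x \<otimes> x \<otimes> x) = g \<otimes> g \<otimes> g"
      using cube_mult_comm[OF dc xc dxc] dxg by simp
    then show ?thesis using d3 xc by simp
  qed
  have G3: "\<phi> (g \<otimes> g \<otimes> g) = g \<otimes> g \<otimes> g" using cux g by (simp add: phi_cube x_def)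
  have H3: "\<phi> (h \<otimes> h \<otimes> h) = h \<otimes> h \<otimes> h" using cu h by (simp add: phi_cube y_def)
  have gc: "g \<otimes> g \<otimes> g \<in> carrier G" and hc: "h \<otimes> h \<otimes> h \<in> carrier G" using g h by auto
  have Gg: "(g \<otimes> g \<otimes> g) \<otimes> g = g \<otimes> (g \<otimes> g \<otimes> g)" using g by (simp add: m_assoc)
  have Hh: "(h \<otimes> h \<otimes> h) \<otimes> h = h \<otimes> (h \<otimes> h \<otimes> h)" using h by (simp add: m_assoc)
  have Gd: "(g \<otimes> g \<otimes> g) \<otimes> d = d \<otimes> (g \<otimes> g \<otimes> g)" using comm_cube[OF g dc] dg by simp
  have Gx: "(g \<otimes> g \<otimes> g) \<otimes> x = x \<otimes> (g \<otimes> g \<otimes> g)"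
    using comm_mult_right[OF gc inv_closed[OF dc] g comm_inv_right[OF gc dc Gd] Gg] xd by simp
  have Gy: "(g \<otimes> g \<otimes> g) \<otimes> y = y \<otimes> (g \<otimes> g \<otimes> g)"
    using comm_mult_right[OF gc dc h Gd core1(2)] dhy by simp
  have Hy: "(h \<otimes> h \<otimes> h) \<otimes> y = y \<otimes> (h \<otimes> h \<otimes> h)" using comm_cube[OF h yc] hy by simp
  have Hx: "(h \<otimes> h \<otimes> h) \<otimes> x = x \<otimes> (h \<otimes> h \<otimes> h)"
    using xeq comm_mult_right[OF hc inv_closed[OF yc] m_closed[OF h g] comm_inv_right[OF hc yc Hy]
        comm_mult_right[OF hc h g Hh core1(1)]] by simp
  show ?thesis using G3 H3 Gg Gx Gy core1 Hh Hx Hy by (auto simp: x_def[symmetric] y_def[symmetric])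
qed

end

lemma (in group) comm_generate:
  assumes c: "c \<in> carrier G" and S: "S \<subseteq> carrier G" and cs: "\<forall>s\<in>S. c \<otimes> s = s \<otimes> c"
    and w: "w \<in> generate G S"
  shows "c \<otimes> w = w \<otimes> c"
  using w
proof (induct w rule: generate.induct)
  case one
  then show ?case using c by simp
next
  case (incl h)
  then show ?case using cs by blast
next
  case (inv h)
  then show ?case using cs c S comm_inv_right by blast
next
  case (eng h1 h2)
  then show ?case using comm_mult_right[OF c] generate_in_carrier[OF S] by blast
qed

theorem lemma3p4:
  fixes G (structure) and \<phi> :: "'g \<Rightarrow> 'g" and g h :: 'g
  assumes "group G"
    and "CHAR('r::comm_ring_1) = 3"
    and "group_involution G \<phi>"
    and "skew_commutative G \<phi> TYPE('r)"
    and "g \<in> carrier G" and "h \<in> carrier G"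
    and "g \<notin> fixed_elems G \<phi>" and "h \<notin> fixed_elems G \<phi>"
    and "g \<otimes> h \<noteq> h \<otimes> g"
  shows
   "((g \<otimes> h \<in> fixed_elems G \<phi> \<and> h \<otimes> g \<in> fixed_elems G \<phi> \<and>
        h \<otimes> \<phi> g = g \<otimes> \<phi> h \<and> \<phi> h \<otimes> g = \<phi> g \<otimes> h)
     \<or> (g \<otimes> h \<in> fixed_elems G \<phi> \<and> h \<otimes> g \<in> fixed_elems G \<phi> \<and>
        h \<otimes> \<phi> g = \<phi> g \<otimes> h)
     \<longrightarrow> g [^] (3::nat) \<notin> fixed_elems G \<phi> \<and> h [^] (3::nat) \<notin> fixed_elems G \<phi>)
    \<and>
    ((g \<otimes> h \<in> fixed_elems G \<phi> \<and> h \<otimes> g = \<phi> g \<otimes> h \<and> \<phi> g \<otimes> h = g \<otimes> \<phi> h)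
     \<or> (g \<otimes> h = h \<otimes> \<phi> g \<and> h \<otimes> \<phi> g = \<phi> g \<otimes> \<phi> h \<and> \<phi> h \<otimes> g = \<phi> g \<otimes> h)
     \<or> (g \<otimes> h = \<phi> h \<otimes> g \<and> \<phi> h \<otimes> g = \<phi> g \<otimes> \<phi> h \<and> h \<otimes> \<phi> g = g \<otimes> \<phi> h)
     \<or> (h \<otimes> g \<in> fixed_elems G \<phi> \<and> g \<otimes> h = \<phi> h \<otimes> g \<and> \<phi> h \<otimes> g = h \<otimes> \<phi> g)
     \<longrightarrow> g [^] (3::nat) \<in> fixed_elems G \<phi> \<and> h [^] (3::nat) \<in> fixed_elems G \<phi> \<and>
         (\<forall>x \<in> generate G {g, h, \<phi> g, \<phi> h}.
            g [^] (3::nat) \<otimes> x = x \<otimes> g [^] (3::nat) \<and>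
            h [^] (3::nat) \<otimes> x = x \<otimes> h [^] (3::nat)))"
proof -
  interpret invol_group G \<phi> using assms(1,3) by (simp add: invol_group_def invol_group_axioms_def)
  interpret invol3 G \<phi>
  proof
    fix a b z assume "a \<in> carrier G" "\<phi> a \<noteq> a" "b \<in> carrier G" "\<phi> b \<noteq> b" "z \<in> carrier G"
    then show "cntA G \<phi> a b z mod 3 = cntB G \<phi> a b z mod 3"
      using pair_count[OF assms(1,2,3,4)] by blast
  qed
  have g: "g \<in> carrier G" and h: "h \<in> carrier G" using assms by auto
  have ng: "\<phi> g \<noteq> g" and nh: "\<phi> h \<noteq> h" using assms(5-8) by (auto simp: fixed_elems_def)
  have nc: "g \<otimes> h \<noteq> h \<otimes> g" and nc': "h \<otimes> g \<noteq> g \<otimes> h" using assms(9) by auto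
  have fx: "u \<in> fixed_elems G \<phi> \<longleftrightarrow> u \<in> carrier G \<and> \<phi> u = u" for u by (simp add: fixed_elems_def)
  have p3g: "g [^] (3::nat) = g \<otimes> g \<otimes> g" and p3h: "h [^] (3::nat) = h \<otimes> h \<otimes> h"
    using g h by (auto simp: pow3)
  have part1: "g [^] (3::nat) \<notin> fixed_elems G \<phi> \<and> h [^] (3::nat) \<notin> fixed_elems G \<phi>"
    if H: "(g \<otimes> h \<in> fixed_elems G \<phi> \<and> h \<otimes> g \<in> fixed_elems G \<phi> \<and>
        h \<otimes> \<phi> g = g \<otimes> \<phi> h \<and> \<phi> h \<otimes> g = \<phi> g \<otimes> h)
     \<or> (g \<otimes> h \<in> fixed_elems G \<phi> \<and> h \<otimes> g \<in> fixed_elems G \<phi> \<and>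
        h \<otimes> \<phi> g = \<phi> g \<otimes> h)"
    using H
  proof
    assume C: "g \<otimes> h \<in> fixed_elems G \<phi> \<and> h \<otimes> g \<in> fixed_elems G \<phi> \<and>
        h \<otimes> \<phi> g = g \<otimes> \<phi> h \<and> \<phi> h \<otimes> g = \<phi> g \<otimes> h"
    then have f1: "\<phi> (g \<otimes> h) = g \<otimes> h" and f2: "\<phi> (h \<otimes> g) = h \<otimes> g"
      and c3: "h \<otimes> \<phi> g = g \<otimes> \<phi> h" and c4: "\<phi> h \<otimes> g = \<phi> g \<otimes> h" by (auto simp: fx)
    have "\<phi> (g \<otimes> g \<otimes> g) \<noteq> g \<otimes> g \<otimes> g" using C1_false[OF g h ng nh f1 f2 c3 c4] by blast
    moreover have "\<phi> (h \<otimes> h \<otimes> h) \<noteq> h \<otimes> h \<otimes> h"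
      using C1_false[OF h g nh ng f2 f1 c3[symmetric] c4[symmetric]] by blast
    ultimately show ?thesis by (simp add: fx p3g p3h)
  next
    assume C: "g \<otimes> h \<in> fixed_elems G \<phi> \<and> h \<otimes> g \<in> fixed_elems G \<phi> \<and> h \<otimes> \<phi> g = \<phi> g \<otimes> h"
    then have f1: "\<phi> (g \<otimes> h) = g \<otimes> h" and f2: "\<phi> (h \<otimes> g) = h \<otimes> g"
      and c: "h \<otimes> \<phi> g = \<phi> g \<otimes> h" by (auto simp: fx)
    have c': "g \<otimes> \<phi> h = \<phi> h \<otimes> g"
    proof -
      have "\<phi> (h \<otimes> \<phi> g) = \<phi> (\<phi> g \<otimes> h)" using c by simp
      then show ?thesis using g h by (simp add: phi_mult)
    qed
    have "\<phi> (g \<otimes> g \<otimes> g) \<noteq> g \<otimes> g \<otimes> g" using C2_false[OF g h ng nh nc f1 c] by blast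
    moreover have "\<phi> (h \<otimes> h \<otimes> h) \<noteq> h \<otimes> h \<otimes> h"
      using C2_false[OF h g nh ng nc' f2 c'] by blast
    ultimately show ?thesis by (simp add: fx p3g p3h)
  qed
  define P where "P a b \<longleftrightarrow> \<phi> (a \<otimes> a \<otimes> a) = a \<otimes> a \<otimes> a \<and> \<phi> (b \<otimes> b \<otimes> b) = b \<otimes> b \<otimes> b \<and>
    (\<forall>w\<in>{a, b, \<phi> a, \<phi> b}. (a \<otimes> a \<otimes> a) \<otimes> w = w \<otimes> (a \<otimes> a \<otimes> a) \<and> (b \<otimes> b \<otimes> b) \<otimes> w = w \<otimes> (b \<otimes> b \<otimes> b))" for a b
  have Psym: "P g h" if PH: "P h g"
  proof -
    have se: "{h, g, \<phi> h, \<phi> g} = {g, h, \<phi> g, \<phi> h}" by auto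
    from PH have A: "\<phi> (h \<otimes> h \<otimes> h) = h \<otimes> h \<otimes> h" "\<phi> (g \<otimes> g \<otimes> g) = g \<otimes> g \<otimes> g"
      and B: "\<forall>w\<in>{g, h, \<phi> g, \<phi> h}. (h \<otimes> h \<otimes> h) \<otimes> w = w \<otimes> (h \<otimes> h \<otimes> h) \<and> (g \<otimes> g \<otimes> g) \<otimes> w = w \<otimes> (g \<otimes> g \<otimes> g)"
      unfolding P_def se by auto
    show ?thesis unfolding P_def using A B by blast
  qed
  have part2: "P g h"
    if H: "(g \<otimes> h \<in> fixed_elems G \<phi> \<and> h \<otimes> g = \<phi> g \<otimes> h \<and> \<phi> g \<otimes> h = g \<otimes> \<phi> h)
     \<or> (g \<otimes> h = h \<otimes> \<phi> g \<and> h \<otimes> \<phi> g = \<phi> g \<otimes> \<phi> h \<and> \<phi> h \<otimes> g = \<phi> g \<otimes> h)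
     \<or> (g \<otimes> h = \<phi> h \<otimes> g \<and> \<phi> h \<otimes> g = \<phi> g \<otimes> \<phi> h \<and> h \<otimes> \<phi> g = g \<otimes> \<phi> h)
     \<or> (h \<otimes> g \<in> fixed_elems G \<phi> \<and> g \<otimes> h = \<phi> h \<otimes> g \<and> \<phi> h \<otimes> g = h \<otimes> \<phi> g)"
  proof -
    consider (c3) "g \<otimes> h \<in> fixed_elems G \<phi> \<and> h \<otimes> g = \<phi> g \<otimes> h \<and> \<phi> g \<otimes> h = g \<otimes> \<phi> h"
      | (c4) "g \<otimes> h = h \<otimes> \<phi> g \<and> h \<otimes> \<phi> g = \<phi> g \<otimes> \<phi> h \<and> \<phi> h \<otimes> g = \<phi> g \<otimes> h"
      | (c5) "g \<otimes> h = \<phi> h \<otimes> g \<and> \<phi> h \<otimes> g = \<phi> g \<otimes> \<phi> h \<and> h \<otimes> \<phi> g = g \<otimes> \<phi> h"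
      | (c6) "h \<otimes> g \<in> fixed_elems G \<phi> \<and> g \<otimes> h = \<phi> h \<otimes> g \<and> \<phi> h \<otimes> g = h \<otimes> \<phi> g"
      using H by blast
    then show ?thesis
    proof cases
      case c3
      then have f1: "\<phi> (g \<otimes> h) = g \<otimes> h" and a1: "h \<otimes> g = \<phi> g \<otimes> h" and a2: "\<phi> g \<otimes> h = g \<otimes> \<phi> h"
        by (auto simp: fx)
      show ?thesis unfolding P_def by (rule C3_good[OF g h ng nh nc f1 a1 a2])
    next
      case c4
      then have a1: "g \<otimes> h = h \<otimes> \<phi> g" and a2: "h \<otimes> \<phi> g = \<phi> g \<otimes> \<phi> h" and a3: "\<phi> h \<otimes> g = \<phi> g \<otimes> h"
        by auto
      show ?thesis unfolding P_def by (rule C4_good[OF g h ng nh a1 a2 a3])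
    next
      case c5
      then have a1: "g \<otimes> h = \<phi> h \<otimes> g" and a2: "\<phi> h \<otimes> g = \<phi> g \<otimes> \<phi> h" and a3: "h \<otimes> \<phi> g = g \<otimes> \<phi> h"
        by auto
      show ?thesis unfolding P_def by (rule C5_good[OF g h ng nh a1 a2 a3])
    next
      case c6
      then have f1: "\<phi> (h \<otimes> g) = h \<otimes> g" and a1: "g \<otimes> h = \<phi> h \<otimes> g" and a2: "\<phi> h \<otimes> g = h \<otimes> \<phi> g"
        by (auto simp: fx)
      have "P h g" unfolding P_def by (rule C3_good[OF h g nh ng nc' f1 a1 a2])
      then show ?thesis by (rule Psym)
    qed
  qed
  have fin: "g [^] (3::nat) \<in> fixed_elems G \<phi> \<and> h [^] (3::nat) \<in> fixed_elems G \<phi> \<and>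
         (\<forall>x \<in> generate G {g, h, \<phi> g, \<phi> h}.
            g [^] (3::nat) \<otimes> x = x \<otimes> g [^] (3::nat) \<and>
            h [^] (3::nat) \<otimes> x = x \<otimes> h [^] (3::nat))" if PP: "P g h"
  proof -
    have S: "{g, h, \<phi> g, \<phi> h} \<subseteq> carrier G" using g h by auto
    have gc: "g \<otimes> g \<otimes> g \<in> carrier G" and hc: "h \<otimes> h \<otimes> h \<in> carrier G" using g h by auto
    from PP have G3: "\<phi> (g \<otimes> g \<otimes> g) = g \<otimes> g \<otimes> g" and H3: "\<phi> (h \<otimes> h \<otimes> h) = h \<otimes> h \<otimes> h"
      and cm: "\<forall>w\<in>{g, h, \<phi> g, \<phi> h}. (g \<otimes> g \<otimes> g) \<otimes> w = w \<otimes> (g \<otimes> g \<otimes> g) \<and> (h \<otimes> h \<otimes> h) \<otimes> w = w \<otimes> (h \<otimes> h \<otimes> h)"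
      unfolding P_def by blast+
    have cg: "\<forall>w\<in>{g, h, \<phi> g, \<phi> h}. (g \<otimes> g \<otimes> g) \<otimes> w = w \<otimes> (g \<otimes> g \<otimes> g)" using cm by blast
    have ch: "\<forall>w\<in>{g, h, \<phi> g, \<phi> h}. (h \<otimes> h \<otimes> h) \<otimes> w = w \<otimes> (h \<otimes> h \<otimes> h)" using cm by blast
    have "\<forall>x \<in> generate G {g, h, \<phi> g, \<phi> h}.
            (g \<otimes> g \<otimes> g) \<otimes> x = x \<otimes> (g \<otimes> g \<otimes> g) \<and> (h \<otimes> h \<otimes> h) \<otimes> x = x \<otimes> (h \<otimes> h \<otimes> h)"
      using comm_generate[OF gc S cg] comm_generate[OF hc S ch] by blast
    moreover have "g \<otimes> g \<otimes> g \<in> fixed_elems G \<phi>" "h \<otimes> h \<otimes> h \<in> fixed_elems G \<phi>"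
      using gc hc G3 H3 by (auto simp: fx)
    ultimately show ?thesis by (simp only: p3g p3h)
  qed
  show ?thesis using part1 part2 fin by blast
qed

end
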